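(* Let $A$ be a semi-directed cycle in the dependency graph $N^\star$ of a TCP-net $N$. Then $A$ is conditionally acyclic if $A$ contains a pair of distinct ci-arcs $\gamma_i,\gamma_j$ such that either (a) $A$ contains directed edges, and for every assignment $w$ to $S(\gamma_i)\cap S(\gamma_j)$, at least one of $\gamma_i,\gamma_j$ is oriented by $w$ in the direction opposite to the direction of $A$; or (b) all edges of $A$ are undirected (ci-arcs), and for every assignment $w$ to $S(\gamma_i)\cap S(\gamma_j)$, $\gamma_i$ and $\gamma_j$ are oriented by $w$ in opposite directions with respect to $A$.
   Context: Variables $V$ have finite nonempty domains $D(X)$; $D(U)$ denotes the set of assignments to $U\subseteq V$. A TCP-net is a tuple $N=\langle V,\mathsf{cp},\mathsf{i},\mathsf{ci},\mathsf{cpt},\mathsf{cit}\rangle$ where: $\mathsf{cp}$ is a set of directed cp-arcs $(X,Y)$ between distinct variables; $\mathsf{i}$ is a set of directed i-arcs $(X,Y)$ between distinct variables; $\mathsf{ci}$ is a set of undirected ci-arcs $\{X,Y\}$ between distinct variables, each with a nonempty selector set $S(X,Y)\subseteq V\setminus\{X,Y\}$; $\mathsf{cpt}$ assigns to each variable $X$ a table mapping each assignment to its cp-parents to a strict partial order on $D(X)$; $\mathsf{cit}$ assigns to each ci-arc $\gamma=\{X,Y\}$ a table $CIT(\gamma)$, a possibly partial map from $D(S(X,Y))$ (its rows) to $\{X\rhd Y,\ Y\rhd X\}$; an entry $X\rhd Y$ is read as orienting $\gamma$ from $X$ to $Y$. The dependency graph $N^\star$ has vertex set $V$, the cp-arcs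 and i-arcs as directed edges, the ci-arcs as undirected edges, and additionally, for every ci-arc $\{X_i,X_j\}$ and every $X_k\in S(X_i,X_j)$, the directed edges $(X_k,X_i)$ and $(X_k,X_j)$ (if not already present). A semi-directed cycle of $N^\star$ is a set $A$ of edges of $N^\star$ such that: the underlying undirected (multi)graph of $A$ is a simple cycle (connected, every vertex of degree 2); not all edges of $A$ are directed; and all directed edges of $A$ point the same way around the cycle — this common way is called the direction of $A$. Let $S(A)$ be the union of the selector sets of the ci-arcs in $A$. $A$ is conditionally directed if there is an assignment to $S(A)$ under which every ci-arc of $A$ receives a CIT entry and the resulting orientations, together with the directed edges of $A$, make $A$ a directed cycle; otherwise $A$ is conditionally acyclic. For a ci-arc $\gamma=\{X,Y\}$ and an assignment $w$ to a subset of $S(\gamma)$, $w$ orients $\gamma$ (in a given direction) if all defined rows of $CIT(\gamma)$ consistent with $w$ express the same relative importance between $X$ and $Y$ (that direction). *)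

theory Defs
  imports Main
begin

text \<open>An orientation X |> Y of a ci-arc {X,Y} is represented by the ordered pair (X,Y).\<close>

record ('v, 'd) tcpnet =
  vars  :: "'v set"
  dmn   :: "'v \<Rightarrow> 'd set"
  cp    :: "('v \<times> 'v) set"
  iarcs :: "('v \<times> 'v) set"
  ci    :: "'v set set"
  sel   :: "'v set \<Rightarrow> 'v set"
  cpt   :: "'v \<Rightarrow> ('v \<rightharpoonup> 'd) \<Rightarrow> ('d \<times> 'd) set"
  cit   :: "'v set \<Rightarrow> ('v \<rightharpoonup> 'd) \<Rightarrow> ('v \<times> 'v) option"

definition is_assignment :: "('v, 'd) tcpnet \<Rightarrow> 'v set \<Rightarrow> ('v \<rightharpoonup> 'd) \<Rightarrow> bool" where
  "is_assignment N U w \<longleftrightarrow> dom w = U \<and> (\<forall>x\<in>U. the (w x) \<in> dmn N x)"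

definition cp_parents :: "('v, 'd) tcpnet \<Rightarrow> 'v \<Rightarrow> 'v set" where
  "cp_parents N X = {Y. (Y, X) \<in> cp N}"

definition strict_po_on :: "'d set \<Rightarrow> ('d \<times> 'd) set \<Rightarrow> bool" where
  "strict_po_on D R \<longleftrightarrow> R \<subseteq> D \<times> D \<and> (\<forall>x. (x, x) \<notin> R) \<and> trans R"

definition tcp_net :: "('v, 'd) tcpnet \<Rightarrow> bool" where
  "tcp_net N \<longleftrightarrow>
     (\<forall>X\<in>vars N. finite (dmn N X) \<and> dmn N X \<noteq> {})
   \<and> cp N \<subseteq> vars N \<times> vars N \<and> (\<forall>(X, Y)\<in>cp N. X \<noteq> Y)
   \<and> iarcs N \<subseteq> vars N \<times> vars N \<and> (\<forall>(X, Y)\<in>iarcs N. X \<noteq> Y)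
   \<and> (\<forall>g\<in>ci N. \<exists>X Y. g = {X, Y} \<and> X \<noteq> Y \<and> X \<in> vars N \<and> Y \<in> vars N)
   \<and> (\<forall>g\<in>ci N. sel N g \<noteq> {} \<and> sel N g \<subseteq> vars N - g)
   \<and> (\<forall>X\<in>vars N. \<forall>p. is_assignment N (cp_parents N X) p \<longrightarrow> strict_po_on (dmn N X) (cpt N X p))
   \<and> (\<forall>g\<in>ci N. \<forall>r d. cit N g r = Some d \<longrightarrow>
        is_assignment N (sel N g) r \<and> (\<exists>X Y. g = {X, Y} \<and> d = (X, Y)))"

datatype 'v edge = Dir 'v 'v | Und "'v set"

fun ends :: "'v edge \<Rightarrow> 'v set" where
  "ends (Dir x y) = {x, y}"
| "ends (Und g) = g"

definition dep_edges :: "('v, 'd) tcpnet \<Rightarrow> 'v edge set" where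
  "dep_edges N =
     {Dir x y | x y. (x, y) \<in> cp N \<or> (x, y) \<in> iarcs N \<or> (\<exists>g\<in>ci N. y \<in> g \<and> x \<in> sel N g)}
     \<union> Und ` ci N"

definition verts :: "'v edge set \<Rightarrow> 'v set" where
  "verts A = (\<Union>e\<in>A. ends e)"

definition adj :: "'v edge set \<Rightarrow> ('v \<times> 'v) set" where
  "adj A = {(x, y). \<exists>e\<in>A. x \<in> ends e \<and> y \<in> ends e}"

definition simple_cycle :: "'v edge set \<Rightarrow> bool" where
  "simple_cycle A \<longleftrightarrow> finite A \<and> A \<noteq> {}
     \<and> (\<forall>v\<in>verts A. card {e\<in>A. v \<in> ends e} = 2)
     \<and> (\<forall>u\<in>verts A. \<forall>v\<in>verts A. (u, v) \<in> (adj A)\<^sup>*)"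

text \<open>A traversal of a cycle A (one of the two ways around it) assigns each edge a
  (tail, head) pair such that every vertex is tail of exactly one and head of
  exactly one edge.\<close>

definition is_traversal :: "'v edge set \<Rightarrow> ('v edge \<Rightarrow> 'v \<times> 'v) \<Rightarrow> bool" where
  "is_traversal A T \<longleftrightarrow>
     (\<forall>e\<in>A. \<exists>x y. T e = (x, y) \<and> ends e = {x, y} \<and> x \<noteq> y)
   \<and> (\<forall>v\<in>verts A. card {e\<in>A. fst (T e) = v} = 1 \<and> card {e\<in>A. snd (T e) = v} = 1)"

definition agrees_dir :: "'v edge set \<Rightarrow> ('v edge \<Rightarrow> 'v \<times> 'v) \<Rightarrow> bool" where
  "agrees_dir A T \<longleftrightarrow> (\<forall>x y. Dir x y \<in> A \<longrightarrow> T (Dir x y) = (x, y))"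

definition semi_directed_cycle :: "('v, 'd) tcpnet \<Rightarrow> 'v edge set \<Rightarrow> bool" where
  "semi_directed_cycle N A \<longleftrightarrow> A \<subseteq> dep_edges N \<and> simple_cycle A
     \<and> (\<exists>g. Und g \<in> A) \<and> (\<exists>T. is_traversal A T \<and> agrees_dir A T)"

definition selA :: "('v, 'd) tcpnet \<Rightarrow> 'v edge set \<Rightarrow> 'v set" where
  "selA N A = (\<Union>{sel N g | g. Und g \<in> A})"

definition cond_directed :: "('v, 'd) tcpnet \<Rightarrow> 'v edge set \<Rightarrow> bool" where
  "cond_directed N A \<longleftrightarrow> (\<exists>u. is_assignment N (selA N A) u
     \<and> (\<forall>g. Und g \<in> A \<longrightarrow> cit N g (u |` sel N g) \<noteq> None)
     \<and> (\<exists>T. is_traversal A T \<and> agrees_dir A T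
           \<and> (\<forall>g. Und g \<in> A \<longrightarrow> cit N g (u |` sel N g) = Some (T (Und g)))))"

definition cond_acyclic :: "('v, 'd) tcpnet \<Rightarrow> 'v edge set \<Rightarrow> bool" where
  "cond_acyclic N A \<longleftrightarrow> \<not> cond_directed N A"

definition orients :: "('v, 'd) tcpnet \<Rightarrow> 'v set \<Rightarrow> ('v \<rightharpoonup> 'd) \<Rightarrow> 'v \<times> 'v \<Rightarrow> bool" where
  "orients N g w d \<longleftrightarrow> (\<forall>r o'. cit N g r = Some o' \<and> w \<subseteq>\<^sub>m r \<longrightarrow> o' = d)"

end

theory Submission
  imports Defs
begin

lemma card1_uniq: "card {e\<in>A. P e} = 1 \<Longrightarrow> a \<in> A \<Longrightarrow> P a \<Longrightarrow> b \<in> A \<Longrightarrow> P b \<Longrightarrow> a = b"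
  by (metis (mono_tags, lifting) card_1_singletonE mem_Collect_eq singletonD)

lemma card1_ex: "card {e\<in>A. P e} = 1 \<Longrightarrow> \<exists>a\<in>A. P a"
  by (metis (mono_tags, lifting) card_1_singletonE mem_Collect_eq singletonI)

lemma trav_fst: "is_traversal A T \<Longrightarrow> is_traversal A T' \<Longrightarrow> f \<in> A \<Longrightarrow> fst (T f) = fst (T' f) \<Longrightarrow> T f = T' f"
  unfolding is_traversal_def
  by (smt (verit, ccfv_threshold) doubleton_eq_iff fst_conv prod.collapse)

lemma trav_snd: "is_traversal A T \<Longrightarrow> is_traversal A T' \<Longrightarrow> f \<in> A \<Longrightarrow> snd (T f) = snd (T' f) \<Longrightarrow> T f = T' f"
  unfolding is_traversal_def
  by (smt (verit, ccfv_threshold) doubleton_eq_iff snd_conv prod.collapse)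

lemma trav_step:
  assumes sc: "simple_cycle A" and t: "is_traversal A T" and t': "is_traversal A T'"
    and e: "e \<in> A" and eq: "T e = T' e" and f: "f \<in> A" and ve: "v \<in> ends e" and vf: "v \<in> ends f"
  shows "T f = T' f"
proof (cases "f = e")
  case True then show ?thesis using eq by simp
next
  case ne: False
  have vv: "v \<in> verts A" using e ve unfolding verts_def by auto
  have c2: "card {e'\<in>A. v \<in> ends e'} = 2" using sc vv unfolding simple_cycle_def by auto
  have fin: "finite {e'\<in>A. v \<in> ends e'}" using sc unfolding simple_cycle_def by auto
  have sub: "{e, f} \<subseteq> {e'\<in>A. v \<in> ends e'}" using e f ve vf by auto
  have "card {e, f} = 2" using ne by auto
  hence eqs: "{e'\<in>A. v \<in> ends e'} = {e, f}" using card_subset_eq[OF fin sub] c2 by simp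
  obtain x y where xy: "T e = (x, y)" "ends e = {x, y}" "x \<noteq> y" using t e unfolding is_traversal_def by blast
  have onlyef: "\<And>g. g \<in> A \<Longrightarrow> v \<in> ends g \<Longrightarrow> g = e \<or> g = f" using eqs by blast
  have endsT: "\<And>S g. is_traversal A S \<Longrightarrow> g \<in> A \<Longrightarrow> fst (S g) \<in> ends g \<and> snd (S g) \<in> ends g"
    unfolding is_traversal_def by fastforce
  have v: "v = x \<or> v = y" using xy ve by auto
  then show ?thesis
  proof
    assume vy: "v = y"
    have h1: "\<And>S. is_traversal A S \<Longrightarrow> S e = (x, y) \<Longrightarrow> fst (S f) = v"
    proof -
      fix S assume s: "is_traversal A S" and se: "S e = (x, y)"
      have "card {e'\<in>A. fst (S e') = v} = 1" using s vv unfolding is_traversal_def by auto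
      then obtain g where g: "g \<in> A" "fst (S g) = v" using card1_ex[where A=A and P="\<lambda>e'. _ (S e') = v"] by blast
      have "v \<in> ends g" using endsT[OF s g(1)] g by simp
      hence "g = e \<or> g = f" using onlyef g by blast
      moreover have "g \<noteq> e" proof assume "g = e" hence "fst (S e) = v" using g by simp thus False using se vy xy(3) by simp qed
      ultimately show "fst (S f) = v" using g by simp
    qed
    show ?thesis using h1[OF t xy(1)] h1[OF t'] eq xy(1) trav_fst[OF t t' f] by simp
  next
    assume vx: "v = x"
    have h1: "\<And>S. is_traversal A S \<Longrightarrow> S e = (x, y) \<Longrightarrow> snd (S f) = v"
    proof -
      fix S assume s: "is_traversal A S" and se: "S e = (x, y)"
      have "card {e'\<in>A. snd (S e') = v} = 1" using s vv unfolding is_traversal_def by auto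
      then obtain g where g: "g \<in> A" "snd (S g) = v" using card1_ex[where A=A and P="\<lambda>e'. _ (S e') = v"] by blast
      have "v \<in> ends g" using endsT[OF s g(1)] g by simp
      hence "g = e \<or> g = f" using onlyef g by blast
      moreover have "g \<noteq> e" proof assume "g = e" hence "snd (S e) = v" using g by simp thus False using se vx xy(3) by simp qed
      ultimately show "snd (S f) = v" using g by simp
    qed
    show ?thesis using h1[OF t xy(1)] h1[OF t'] eq xy(1) trav_snd[OF t t' f] by simp
  qed
qed

lemma trav_unique:
  assumes sc: "simple_cycle A" and t: "is_traversal A T" and t': "is_traversal A T'"
    and e0: "e0 \<in> A" and eq: "T e0 = T' e0" and f: "f \<in> A"
  shows "T f = T' f"
proof -
  define P where "P v \<longleftrightarrow> (\<forall>g\<in>A. v \<in> ends g \<longrightarrow> T g = T' g)" for v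
  have prp: "\<And>e v. e \<in> A \<Longrightarrow> T e = T' e \<Longrightarrow> v \<in> ends e \<Longrightarrow> P v"
    unfolding P_def using trav_step[OF sc t t'] by blast
  obtain x y where xy: "T e0 = (x, y)" "ends e0 = {x, y}" using t e0 unfolding is_traversal_def by blast
  have px: "P x" using prp[OF e0 eq] xy by auto
  have xv: "x \<in> verts A" using e0 xy unfolding verts_def by auto
  obtain a b where ab: "T f = (a, b)" "ends f = {a, b}" using t f unfolding is_traversal_def by blast
  have av: "a \<in> verts A" using f ab unfolding verts_def by auto
  have "(x, a) \<in> (adj A)\<^sup>*" using sc xv av unfolding simple_cycle_def by blast
  hence "P a"
  proof (induction rule: rtrancl_induct)
    case base then show ?case using px .
  next
    case (step u w)
    then obtain g where g: "g \<in> A" "u \<in> ends g" "w \<in> ends g" unfolding adj_def by auto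
    with step.IH have "T g = T' g" unfolding P_def by blast
    then show ?case using prp g by blast
  qed
  thus ?thesis unfolding P_def using f ab by auto
qed

lemma trav_swap: "is_traversal A T \<Longrightarrow> is_traversal A (prod.swap \<circ> T)"
  unfolding is_traversal_def by (auto simp: insert_commute)

theorem lemma6:
  assumes "tcp_net N"
    and "semi_directed_cycle N A"
    and "Und gi \<in> A" and "Und gj \<in> A" and "gi \<noteq> gj"
    and "((\<exists>x y. Dir x y \<in> A) \<and>
            (\<exists>T. is_traversal A T \<and> agrees_dir A T \<and>
               (\<forall>w. is_assignment N (sel N gi \<inter> sel N gj) w \<longrightarrow>
                    orients N gi w (prod.swap (T (Und gi)))
                  \<or> orients N gj w (prod.swap (T (Und gj))))))
       \<or> ((\<forall>e\<in>A. \<exists>g. e = Und g) \<and>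
            (\<forall>w. is_assignment N (sel N gi \<inter> sel N gj) w \<longrightarrow>
               (\<exists>T. is_traversal A T \<and>
                  orients N gi w (T (Und gi)) \<and> orients N gj w (prod.swap (T (Und gj))))))"
  shows "cond_acyclic N A"
  unfolding cond_acyclic_def
proof
  assume "cond_directed N A"
  then obtain u T' where u: "is_assignment N (selA N A) u"
    and t': "is_traversal A T'" and ag': "agrees_dir A T'"
    and ct: "\<And>g. Und g \<in> A \<Longrightarrow> cit N g (u |` sel N g) = Some (T' (Und g))"
    unfolding cond_directed_def by blast
  have sc: "simple_cycle A" using assms(2) unfolding semi_directed_cycle_def by blast
  define w where "w = u |` (sel N gi \<inter> sel N gj)"
  have si: "sel N gi \<subseteq> selA N A" using assms(3) unfolding selA_def by blast
  have wa: "is_assignment N (sel N gi \<inter> sel N gj) w"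
    using u si unfolding is_assignment_def w_def by auto
  have wi: "w \<subseteq>\<^sub>m u |` sel N gi" and wj: "w \<subseteq>\<^sub>m u |` sel N gj"
    unfolding w_def map_le_def by (auto simp: restrict_map_def)
  have oi: "\<And>d. orients N gi w d \<Longrightarrow> T' (Und gi) = d"
    using ct[OF assms(3)] wi unfolding orients_def by blast
  have oj: "\<And>d. orients N gj w d \<Longrightarrow> T' (Und gj) = d"
    using ct[OF assms(4)] wj unfolding orients_def by blast
  have noswap: "\<And>S e. is_traversal A S \<Longrightarrow> e \<in> A \<Longrightarrow> S e \<noteq> prod.swap (S e)"
    unfolding is_traversal_def by fastforce
  from assms(6) show False
  proof
    assume "(\<exists>x y. Dir x y \<in> A) \<and>
            (\<exists>T. is_traversal A T \<and> agrees_dir A T \<and>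
               (\<forall>w. is_assignment N (sel N gi \<inter> sel N gj) w \<longrightarrow>
                    orients N gi w (prod.swap (T (Und gi)))
                  \<or> orients N gj w (prod.swap (T (Und gj)))))"
    then obtain x y T where d: "Dir x y \<in> A" and t: "is_traversal A T" and ag: "agrees_dir A T"
      and o: "orients N gi w (prod.swap (T (Und gi))) \<or> orients N gj w (prod.swap (T (Und gj)))"
      using wa by blast
    have "T (Dir x y) = T' (Dir x y)" using ag ag' d unfolding agrees_dir_def by simp
    hence all: "\<And>f. f \<in> A \<Longrightarrow> T f = T' f" using trav_unique[OF sc t t' d] by blast
    from o show False
      using oi oj all assms(3,4) noswap[OF t] by metis
  next
    assume "(\<forall>e\<in>A. \<exists>g. e = Und g) \<and>
            (\<forall>w. is_assignment N (sel N gi \<inter> sel N gj) w \<longrightarrow>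
               (\<exists>T. is_traversal A T \<and>
                  orients N gi w (T (Und gi)) \<and> orients N gj w (prod.swap (T (Und gj)))))"
    then obtain T where t: "is_traversal A T" and o1: "orients N gi w (T (Und gi))"
      and o2: "orients N gj w (prod.swap (T (Und gj)))" using wa by blast
    have "T (Und gi) = T' (Und gi)" using oi[OF o1] by simp
    hence "T (Und gj) = T' (Und gj)" using trav_unique[OF sc t t' assms(3)] assms(4) by blast
    thus False using oj[OF o2] noswap[OF t assms(4)] by simp
  qed
qed

end
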